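(* Let $\Bbbk$ be an algebraically closed field with $\mathrm{char}(\Bbbk)\neq 2$, let $n\ge 1$, and let $\mu=(\mu_{ij})$ with $\mu_{ij}\in\Bbbk^\times$, $\mu_{ij}\mu_{ji}=1$ for all $i,j$, and $\mu_{ii}=1$. Let $S$ be the $\Bbbk$-algebra on generators $z_1,\dots,z_n$ with defining relations $z_jz_i=\mu_{ij}z_iz_j$ for all $i,j$. Let $M_1,\dots,M_n$ be linearly independent $\mu$-symmetric $n\times n$ matrices, let $q_k=\sum_{i,j}(M_k)_{ij}z_iz_j\in S_2$, and assume the quadric system associated to $\{q_1,\dots,q_n\}$ is normalizing and base-point free. Let $A=T(V)/\langle W\rangle$ be the associated graded skew Clifford algebra written as a quadratic algebra, and let $\Gamma=\{(a,b)\in\mathbb P(S_1)\times\mathbb P(S_1): w(a\otimes b)=0\text{ for all }w\in W\}$. Then for $a,b\in S_1\setminus\{0\}$, the quadratic form $ab$ lies in $\mathbb P\big(\sum_{i=1}^n\Bbbk q_i\big)$ if and only if $(a,b)\in\Gamma$.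
   Context: A matrix $M\in M(n,\Bbbk)$ is $\mu$-symmetric if $M_{ij}=\mu_{ij}M_{ji}$ for all $i,j$. Let $U\subset T(S_1)_2=S_1\otimes S_1$ be the span of the defining relations $z_j\otimes z_i-\mu_{ij}z_i\otimes z_j$ of $S$, and let $\mathcal V(U)\subset\mathbb P(S_1^* )\times\mathbb P(S_1^* )$ be its zero locus. For $q\in S_2\setminus\{0\}$, $\mathcal V_U(q)=\mathcal V(\hat q)\cap\mathcal V(U)$ where $\hat q$ is any lift of $q$ to $S_1\otimes S_1$. The quadric system associated to $q_1,\dots,q_n$ is their span; it is normalizing if it is spanned by a normalizing sequence in $S$, and base-point free if $\bigcap_k\mathcal V_U(q_k)=\emptyset$. The graded skew Clifford algebra $A=A(\mu,M_1,\dots,M_n)$ is the graded $\Bbbk$-algebra with degree-one generators $x_1,\dots,x_n$ and degree-two generators $y_1,\dots,y_n$ with relations $x_ix_j+\mu_{ij}x_jx_i=\sum_{k}(M_k)_{ij}y_k$ for all $i,j$, together with the existence of a normalizing sequence $\{y_1',\dots,y_n'\}$ spanning $\sum_k\Bbbk y_k$. Under the stated hypotheses, $A$ is a quadratic algebra generated by $x_1,\dots,x_n$: $A=T(V)/\langle W\rangle$ where $V=S_1^*$, $\{x_i\}$ is the dual basis to $\{z_i\}$, and $W\subseteq V\otimes V$ is the space of quadratic relations, spanned by elements $\sum_{i,j}\alpha_{ijm}(x_ix_j+\mu_{ij}x_jx_i)$; its Koszul dual is $T(S_1)/\langle W^\perp\rangle=S/\langle q_1,\dots,q_n\rangle$,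 where $W^\perp\subseteq S_1\otimes S_1$ is the orthogonal complement of $W$. Here $w(a\otimes b)$ denotes the natural pairing of $w\in V\otimes V$ with $a\otimes b\in S_1\otimes S_1$. *)

theory Defs
  imports Main "HOL-Computational_Algebra.Polynomial"
begin

text \<open>Indices run over 0..n-1 (instead of 1..n). Vectors in S_1 (and in V = S_1^*)
are coefficient functions nat => 'k, only the values at i < n matter.
Tensors in S_1 (x) S_1 and in V (x) V are coefficient matrices nat => nat => 'k.\<close>

definition alg_closed :: "'k::field itself \<Rightarrow> bool" where
  "alg_closed _ \<longleftrightarrow> (\<forall>p :: 'k poly. degree p \<noteq> 0 \<longrightarrow> (\<exists>x. poly p x = 0))"

definition skew_params :: "nat \<Rightarrow> (nat \<Rightarrow> nat \<Rightarrow> 'k::field) \<Rightarrow> bool" where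
  "skew_params n \<mu> \<longleftrightarrow> (\<forall>i<n. \<forall>j<n. \<mu> i j \<noteq> 0 \<and> \<mu> i j * \<mu> j i = 1) \<and> (\<forall>i<n. \<mu> i i = 1)"

definition mu_symmetric :: "nat \<Rightarrow> (nat \<Rightarrow> nat \<Rightarrow> 'k::field) \<Rightarrow> (nat \<Rightarrow> nat \<Rightarrow> 'k) \<Rightarrow> bool" where
  "mu_symmetric n \<mu> N \<longleftrightarrow> (\<forall>i<n. \<forall>j<n. N i j = \<mu> i j * N j i)"

definition lin_indep_mats :: "nat \<Rightarrow> (nat \<Rightarrow> nat \<Rightarrow> nat \<Rightarrow> 'k::field) \<Rightarrow> bool" where
  "lin_indep_mats n M \<longleftrightarrow>
     (\<forall>c. (\<forall>i<n. \<forall>j<n. (\<Sum>k<n. c k * M k i j) = 0) \<longrightarrow> (\<forall>k<n. c k = 0))"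

text \<open>S is realised (via its PBW basis of ordered monomials z_0^a0 ... z_{n-1}^a{n-1})
as functions from exponent vectors (nat => nat) to 'k with finite support on
monomials in the variables 0..n-1.  Relation z_j z_i = mu_ij z_i z_j.\<close>

definition S_carrier :: "nat \<Rightarrow> ((nat \<Rightarrow> nat) \<Rightarrow> 'k::field) set" where
  "S_carrier n = {f. finite {\<alpha>. f \<alpha> \<noteq> 0} \<and> (\<forall>\<alpha>. f \<alpha> \<noteq> 0 \<longrightarrow> (\<forall>i\<ge>n. \<alpha> i = 0))}"

text \<open>z^alpha z^beta = twist * z^(alpha+beta): each z_j of beta moves left past each z_i of alpha
with i > j, using z_i z_j = mu_ji z_j z_i.\<close>
definition twist :: "nat \<Rightarrow> (nat \<Rightarrow> nat \<Rightarrow> 'k::field) \<Rightarrow> (nat \<Rightarrow> nat) \<Rightarrow> (nat \<Rightarrow> nat) \<Rightarrow> 'k" where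
  "twist n \<mu> \<alpha> \<beta> = (\<Prod>i<n. \<Prod>j<i. \<mu> j i ^ (\<alpha> i * \<beta> j))"

definition smult_S :: "nat \<Rightarrow> (nat \<Rightarrow> nat \<Rightarrow> 'k::field) \<Rightarrow> ((nat \<Rightarrow> nat) \<Rightarrow> 'k) \<Rightarrow> ((nat \<Rightarrow> nat) \<Rightarrow> 'k) \<Rightarrow> ((nat \<Rightarrow> nat) \<Rightarrow> 'k)" where
  "smult_S n \<mu> f g = (\<lambda>\<gamma>. \<Sum>\<alpha>\<in>{\<alpha>. \<forall>i. \<alpha> i \<le> \<gamma> i}. f \<alpha> * g (\<lambda>i. \<gamma> i - \<alpha> i) * twist n \<mu> \<alpha> (\<lambda>i. \<gamma> i - \<alpha> i))"

definition zvar :: "nat \<Rightarrow> (nat \<Rightarrow> nat) \<Rightarrow> 'k::field" where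
  "zvar i = (\<lambda>\<alpha>. if \<alpha> = (\<lambda>l. if l = i then 1 else 0) then 1 else 0)"

definition linS :: "nat \<Rightarrow> (nat \<Rightarrow> 'k::field) \<Rightarrow> (nat \<Rightarrow> nat) \<Rightarrow> 'k" where
  "linS n a = (\<lambda>\<alpha>. \<Sum>i<n. a i * zvar i \<alpha>)"

definition qS :: "nat \<Rightarrow> (nat \<Rightarrow> nat \<Rightarrow> 'k::field) \<Rightarrow> (nat \<Rightarrow> nat \<Rightarrow> 'k) \<Rightarrow> (nat \<Rightarrow> nat) \<Rightarrow> 'k" where
  "qS n \<mu> N = (\<lambda>\<gamma>. \<Sum>i<n. \<Sum>j<n. N i j * smult_S n \<mu> (zvar i) (zvar j) \<gamma>)"

definition qspan :: "nat \<Rightarrow> (nat \<Rightarrow> nat \<Rightarrow> 'k::field) \<Rightarrow> (nat \<Rightarrow> nat \<Rightarrow> nat \<Rightarrow> 'k) \<Rightarrow> ((nat \<Rightarrow> nat) \<Rightarrow> 'k) set" where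
  "qspan n \<mu> M = {f. \<exists>c. f = (\<lambda>\<gamma>. \<Sum>k<n. c k * qS n \<mu> (M k) \<gamma>)}"

inductive_set ideal_gen :: "nat \<Rightarrow> (nat \<Rightarrow> nat \<Rightarrow> 'k::field) \<Rightarrow> ((nat \<Rightarrow> nat) \<Rightarrow> 'k) set \<Rightarrow> ((nat \<Rightarrow> nat) \<Rightarrow> 'k) set"
  for n \<mu> Y where
  zero: "(\<lambda>_. 0) \<in> ideal_gen n \<mu> Y"
| gen: "y \<in> Y \<Longrightarrow> s \<in> S_carrier n \<Longrightarrow> t \<in> S_carrier n \<Longrightarrow>
          smult_S n \<mu> (smult_S n \<mu> s y) t \<in> ideal_gen n \<mu> Y"
| add: "f \<in> ideal_gen n \<mu> Y \<Longrightarrow> g \<in> ideal_gen n \<mu> Y \<Longrightarrow> (\<lambda>\<gamma>. f \<gamma> + g \<gamma>) \<in> ideal_gen n \<mu> Y"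

definition normal_mod :: "nat \<Rightarrow> (nat \<Rightarrow> nat \<Rightarrow> 'k::field) \<Rightarrow> ((nat \<Rightarrow> nat) \<Rightarrow> 'k) set \<Rightarrow> ((nat \<Rightarrow> nat) \<Rightarrow> 'k) \<Rightarrow> bool" where
  "normal_mod n \<mu> I y \<longleftrightarrow>
     (\<forall>s\<in>S_carrier n. (\<exists>t\<in>S_carrier n. (\<lambda>\<gamma>. smult_S n \<mu> y s \<gamma> - smult_S n \<mu> t y \<gamma>) \<in> I)
                     \<and> (\<exists>t\<in>S_carrier n. (\<lambda>\<gamma>. smult_S n \<mu> s y \<gamma> - smult_S n \<mu> y t \<gamma>) \<in> I))"

definition normalizing_seq :: "nat \<Rightarrow> (nat \<Rightarrow> nat \<Rightarrow> 'k::field) \<Rightarrow> ((nat \<Rightarrow> nat) \<Rightarrow> 'k) list \<Rightarrow> bool" where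
  "normalizing_seq n \<mu> ys \<longleftrightarrow> set ys \<subseteq> S_carrier n \<and>
     (\<forall>k<length ys. normal_mod n \<mu> (ideal_gen n \<mu> (set (take k ys))) (ys ! k))"

definition normalizing_qsystem :: "nat \<Rightarrow> (nat \<Rightarrow> nat \<Rightarrow> 'k::field) \<Rightarrow> (nat \<Rightarrow> nat \<Rightarrow> nat \<Rightarrow> 'k) \<Rightarrow> bool" where
  "normalizing_qsystem n \<mu> M \<longleftrightarrow>
     (\<exists>ys. length ys = n \<and> normalizing_seq n \<mu> ys \<and>
        {f. \<exists>c. f = (\<lambda>\<gamma>. \<Sum>l<n. c l * (ys ! l) \<gamma>)} = qspan n \<mu> M)"

definition nonzero_vec :: "nat \<Rightarrow> (nat \<Rightarrow> 'k::field) \<Rightarrow> bool" where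
  "nonzero_vec n p \<longleftrightarrow> (\<exists>i<n. p i \<noteq> 0)"

definition in_VU :: "nat \<Rightarrow> (nat \<Rightarrow> nat \<Rightarrow> 'k::field) \<Rightarrow> (nat \<Rightarrow> 'k) \<Rightarrow> (nat \<Rightarrow> 'k) \<Rightarrow> bool" where
  "in_VU n \<mu> p p' \<longleftrightarrow> (\<forall>i<n. \<forall>j<n. p j * p' i - \<mu> i j * p i * p' j = 0)"

text \<open>(p,p') in V_U(q) for q = sum N_ij z_i z_j, with lift sum N_ij z_i (x) z_j.\<close>
definition in_VUq :: "nat \<Rightarrow> (nat \<Rightarrow> nat \<Rightarrow> 'k::field) \<Rightarrow> (nat \<Rightarrow> nat \<Rightarrow> 'k) \<Rightarrow> (nat \<Rightarrow> 'k) \<Rightarrow> (nat \<Rightarrow> 'k) \<Rightarrow> bool" where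
  "in_VUq n \<mu> N p p' \<longleftrightarrow> (\<Sum>i<n. \<Sum>j<n. N i j * p i * p' j) = 0 \<and> in_VU n \<mu> p p'"

definition base_point_free :: "nat \<Rightarrow> (nat \<Rightarrow> nat \<Rightarrow> 'k::field) \<Rightarrow> (nat \<Rightarrow> nat \<Rightarrow> nat \<Rightarrow> 'k) \<Rightarrow> bool" where
  "base_point_free n \<mu> M \<longleftrightarrow>
     \<not> (\<exists>p p'. nonzero_vec n p \<and> nonzero_vec n p' \<and> (\<forall>k<n. in_VUq n \<mu> (M k) p p'))"

text \<open>W: elements sum_{i,j} alpha_ij (x_i x_j + mu_ij x_j x_i) of V (x) V that vanish in A, i.e.
whose image sum_k (sum_{ij} alpha_ij (M_k)_ij) y_k is zero.  Coefficient matrix w_lm of x_l x_m.\<close>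
definition Wrel :: "nat \<Rightarrow> (nat \<Rightarrow> nat \<Rightarrow> 'k::field) \<Rightarrow> (nat \<Rightarrow> nat \<Rightarrow> nat \<Rightarrow> 'k) \<Rightarrow> (nat \<Rightarrow> nat \<Rightarrow> 'k) set" where
  "Wrel n \<mu> M = {w. \<exists>\<alpha>. (\<forall>k<n. (\<Sum>i<n. \<Sum>j<n. \<alpha> i j * M k i j) = 0) \<and>
      (\<forall>l m. w l m = (if l < n \<and> m < n then \<alpha> l m + \<mu> m l * \<alpha> m l else 0))}"

text \<open>Gamma (on representatives of points of P(S_1) x P(S_1)).\<close>
definition Gamma :: "nat \<Rightarrow> (nat \<Rightarrow> nat \<Rightarrow> 'k::field) \<Rightarrow> (nat \<Rightarrow> nat \<Rightarrow> nat \<Rightarrow> 'k) \<Rightarrow> ((nat \<Rightarrow> 'k) \<times> (nat \<Rightarrow> 'k)) set" where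
  "Gamma n \<mu> M = {(a, b). nonzero_vec n a \<and> nonzero_vec n b \<and>
      (\<forall>w\<in>Wrel n \<mu> M. (\<Sum>i<n. \<Sum>j<n. w i j * a i * b j) = 0)}"

text \<open>ab (product in S) defines a point of P(sum_k k q_k): nonzero and in the span.\<close>
definition in_proj_qspan :: "nat \<Rightarrow> (nat \<Rightarrow> nat \<Rightarrow> 'k::field) \<Rightarrow> (nat \<Rightarrow> nat \<Rightarrow> nat \<Rightarrow> 'k) \<Rightarrow> (nat \<Rightarrow> 'k) \<Rightarrow> (nat \<Rightarrow> 'k) \<Rightarrow> bool" where
  "in_proj_qspan n \<mu> M a b \<longleftrightarrow>
     (let ab = smult_S n \<mu> (linS n a) (linS n b) in ab \<noteq> (\<lambda>_. 0) \<and> ab \<in> qspan n \<mu> M)"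

end

theory Submission
  imports Defs
begin

lemma dual_lemma:
  fixes v :: "nat \<Rightarrow> 'd \<Rightarrow> 'k::field" and P :: "'d \<Rightarrow> 'k"
  assumes "finite D"
  shows "(\<exists>c. \<forall>d\<in>D. P d = (\<Sum>k<m. c k * v k d)) \<or>
         (\<exists>\<alpha>. (\<forall>k<m. (\<Sum>d\<in>D. \<alpha> d * v k d) = 0) \<and> (\<Sum>d\<in>D. \<alpha> d * P d) \<noteq> 0)"
  using assms
proof (induction m arbitrary: v P)
  case 0
  show ?case
  proof (cases "\<forall>d\<in>D. P d = 0")
    case True then show ?thesis by auto
  next
    case False
    then obtain d0 where d0: "d0 \<in> D" "P d0 \<noteq> 0" by auto
    have "(\<Sum>d\<in>D. (\<lambda>d. if d = d0 then 1 else 0) d * P d) = P d0"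
    proof -
      have "(\<Sum>d\<in>D. (\<lambda>d. if d = d0 then 1 else 0) d * P d) = (\<Sum>d\<in>D. if d = d0 then P d else 0)"
        by (rule sum.cong) auto
      also have "\<dots> = P d0" using d0 0 by (simp add: sum.delta)
      finally show ?thesis .
    qed
    then show ?thesis using d0 by (intro disjI2 exI[of _ "\<lambda>d. if d = d0 then 1 else 0"]) auto
  qed
next
  case (Suc m)
  show ?case
  proof (cases "\<forall>d\<in>D. v m d = 0")
    case True
    from Suc.IH[of P v, OF Suc.prems] show ?thesis
    proof
      assume "\<exists>c. \<forall>d\<in>D. P d = (\<Sum>k<m. c k * v k d)"
      then obtain c where c: "\<forall>d\<in>D. P d = (\<Sum>k<m. c k * v k d)" by blast
      have "\<forall>d\<in>D. P d = (\<Sum>k<Suc m. c k * v k d)" using c True by simp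
      thus ?thesis by blast
    next
      assume "\<exists>\<alpha>. (\<forall>k<m. (\<Sum>d\<in>D. \<alpha> d * v k d) = 0) \<and> (\<Sum>d\<in>D. \<alpha> d * P d) \<noteq> 0"
      then obtain \<alpha> where a: "\<forall>k<m. (\<Sum>d\<in>D. \<alpha> d * v k d) = 0" "(\<Sum>d\<in>D. \<alpha> d * P d) \<noteq> 0" by blast
      have "(\<Sum>d\<in>D. \<alpha> d * v m d) = 0" using True by simp
      then have "\<forall>k<Suc m. (\<Sum>d\<in>D. \<alpha> d * v k d) = 0" using a(1) less_Suc_eq by auto
      thus ?thesis using a(2) by blast
    qed
  next
    case False
    then obtain d0 where d0: "d0 \<in> D" "v m d0 \<noteq> 0" by auto
    define v' where "v' k d = v k d - (v k d0 / v m d0) * v m d" for k d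
    define P' where "P' d = P d - (P d0 / v m d0) * v m d" for d
    from Suc.IH[of P' v', OF Suc.prems] show ?thesis
    proof
      assume "\<exists>c. \<forall>d\<in>D. P' d = (\<Sum>k<m. c k * v' k d)"
      then obtain c where c: "\<forall>d\<in>D. P' d = (\<Sum>k<m. c k * v' k d)" by blast
      define c' where "c' k = (if k < m then c k else (P d0 - (\<Sum>k<m. c k * v k d0)) / v m d0)" for k
      have "\<forall>d\<in>D. P d = (\<Sum>k<Suc m. c' k * v k d)"
      proof
        fix d assume d: "d \<in> D"
        have e1: "(\<Sum>k<m. c k * v' k d) = (\<Sum>k<m. c k * v k d) - (\<Sum>k<m. c k * v k d0 * v m d / v m d0)"
          by (simp add: v'_def right_diff_distrib sum_subtractf mult_ac)
        have e2: "(\<Sum>k<m. c k * v k d0 * v m d / v m d0) = (\<Sum>k<m. c k * v k d0) * v m d / v m d0"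
          by (simp add: sum_distrib_right sum_divide_distrib)
        have e3: "(\<Sum>k<Suc m. c' k * v k d) = (\<Sum>k<m. c k * v k d) + c' m * v m d"
          by (simp add: c'_def)
        have "P d = P' d + (P d0 / v m d0) * v m d" by (simp add: P'_def)
        also have "\<dots> = (\<Sum>k<m. c k * v k d) - (\<Sum>k<m. c k * v k d0) * v m d / v m d0 + (P d0 / v m d0) * v m d"
          using c d e1 e2 by simp
        also have "\<dots> = (\<Sum>k<Suc m. c' k * v k d)" unfolding e3 using d0
          by (simp add: c'_def field_simps)
        finally show "P d = (\<Sum>k<Suc m. c' k * v k d)" .
      qed
      thus ?thesis by blast
    next
      assume "\<exists>\<alpha>. (\<forall>k<m. (\<Sum>d\<in>D. \<alpha> d * v' k d) = 0) \<and> (\<Sum>d\<in>D. \<alpha> d * P' d) \<noteq> 0"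
      then obtain \<alpha> where a: "\<forall>k<m. (\<Sum>d\<in>D. \<alpha> d * v' k d) = 0" "(\<Sum>d\<in>D. \<alpha> d * P' d) \<noteq> 0" by blast
      define s where "s = (\<Sum>d\<in>D. \<alpha> d * v m d)"
      define \<beta> where "\<beta> d = \<alpha> d - (if d = d0 then s / v m d0 else 0)" for d
      have key: "(\<Sum>d\<in>D. \<beta> d * u d) = (\<Sum>d\<in>D. \<alpha> d * u d) - s / v m d0 * u d0" for u :: "'d \<Rightarrow> 'k"
      proof -
        have "(\<Sum>d\<in>D. \<beta> d * u d) = (\<Sum>d\<in>D. \<alpha> d * u d - (if d = d0 then s / v m d0 * u d0 else 0))"
          by (rule sum.cong) (auto simp: \<beta>_def left_diff_distrib)
        also have "\<dots> = (\<Sum>d\<in>D. \<alpha> d * u d) - s / v m d0 * u d0"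
          using d0 Suc.prems by (simp add: sum_subtractf sum.delta)
        finally show ?thesis .
      qed
      have kv: "(\<Sum>d\<in>D. \<alpha> d * v' k d) = (\<Sum>d\<in>D. \<alpha> d * v k d) - s * v k d0 / v m d0" for k
      proof -
        have "(\<Sum>d\<in>D. \<alpha> d * v' k d) = (\<Sum>d\<in>D. \<alpha> d * v k d - (v k d0 / v m d0) * (\<alpha> d * v m d))"
          by (rule sum.cong) (auto simp: v'_def algebra_simps)
        also have "\<dots> = (\<Sum>d\<in>D. \<alpha> d * v k d) - (v k d0 / v m d0) * s"
          by (simp add: sum_subtractf sum_distrib_left s_def)
        also have "\<dots> = (\<Sum>d\<in>D. \<alpha> d * v k d) - s * v k d0 / v m d0" by simp
        finally show ?thesis .
      qed
      have kP: "(\<Sum>d\<in>D. \<alpha> d * P' d) = (\<Sum>d\<in>D. \<alpha> d * P d) - s * P d0 / v m d0"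
      proof -
        have "(\<Sum>d\<in>D. \<alpha> d * P' d) = (\<Sum>d\<in>D. \<alpha> d * P d - (P d0 / v m d0) * (\<alpha> d * v m d))"
          by (rule sum.cong) (auto simp: P'_def algebra_simps)
        also have "\<dots> = (\<Sum>d\<in>D. \<alpha> d * P d) - (P d0 / v m d0) * s"
          by (simp add: sum_subtractf sum_distrib_left s_def)
        also have "\<dots> = (\<Sum>d\<in>D. \<alpha> d * P d) - s * P d0 / v m d0" by simp
        finally show ?thesis .
      qed
      have "\<forall>k<Suc m. (\<Sum>d\<in>D. \<beta> d * v k d) = 0"
      proof (intro allI impI)
        fix k assume "k < Suc m"
        then consider "k < m" | "k = m" by linarith
        then show "(\<Sum>d\<in>D. \<beta> d * v k d) = 0"
        proof cases
          case 1 then show ?thesis using a(1) kv[of k] key[of "v k"] by (simp add: mult_ac)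
        next
          case 2 then show ?thesis using key[of "v m"] d0 by (simp add: s_def)
        qed
      qed
      moreover have "(\<Sum>d\<in>D. \<beta> d * P d) \<noteq> 0" using a(2) kP key[of P] by (simp add: mult_ac)
      ultimately show ?thesis by blast
    qed
  qed
qed

definition evv :: "nat \<Rightarrow> nat \<Rightarrow> nat \<Rightarrow> nat" where
  "evv i j = (\<lambda>l. (if l = i then 1 else 0) + (if l = j then 1 else 0))"

definition tw :: "(nat \<Rightarrow> nat \<Rightarrow> 'k::field) \<Rightarrow> nat \<Rightarrow> nat \<Rightarrow> 'k" where
  "tw \<mu> i j = (if j < i then \<mu> j i else 1)"

definition Zf :: "(nat \<Rightarrow> nat \<Rightarrow> 'k::field) \<Rightarrow> nat \<Rightarrow> nat \<Rightarrow> (nat \<Rightarrow> nat) \<Rightarrow> 'k" where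
  "Zf \<mu> i j \<gamma> = (if \<gamma> = evv i j then tw \<mu> i j else 0)"

lemma twist_unit:
  assumes "i < n"
  shows "twist n \<mu> (\<lambda>l. if l = i then 1 else 0) (\<lambda>l. if l = j then 1 else 0) = tw \<mu> i j"
proof -
  have inner: "(\<Prod>m<l. \<mu> m l ^ ((if l = i then 1 else 0) * (if m = j then 1 else 0)))
      = (if l = i then (if j < l then \<mu> j l else 1) else 1)" for l
  proof (cases "l = i")
    case True
    have "(\<Prod>m<l. \<mu> m l ^ ((if l = i then 1 else 0) * (if m = j then 1 else 0)))
        = (\<Prod>m<l. if m = j then \<mu> m l else 1)"
      by (rule prod.cong) (auto simp: True)
    also have "\<dots> = (if j < l then \<mu> j l else 1)" by (simp add: prod.delta)
    finally show ?thesis using True by simp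
  qed simp
  show ?thesis unfolding twist_def inner using assms by (simp add: prod.delta tw_def)
qed

lemma Z_formula:
  assumes "i < n"
  shows "smult_S n \<mu> (zvar i) (zvar j) \<gamma> = Zf \<mu> i j \<gamma>"
proof -
  define e :: "nat \<Rightarrow> nat \<Rightarrow> nat" where "e k = (\<lambda>l. if l = k then (1::nat) else 0)" for k
  have zv: "zvar k \<alpha> = (if \<alpha> = e k then 1 else 0)" for k :: nat and \<alpha> :: "nat \<Rightarrow> nat"
    by (simp add: zvar_def e_def)
  define A where "A = {\<alpha>. \<forall>l. \<alpha> l \<le> \<gamma> l}"
  define f where "f \<alpha> = zvar i \<alpha> * zvar j (\<lambda>l. \<gamma> l - \<alpha> l) * twist n \<mu> \<alpha> (\<lambda>l. \<gamma> l - \<alpha> l)" for \<alpha>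
  have S: "smult_S n \<mu> (zvar i) (zvar j) \<gamma> = sum f A" by (simp add: smult_S_def A_def f_def)
  show ?thesis
  proof (cases "\<gamma> = evv i j")
    case True
    have fin: "finite A"
    proof (rule finite_subset)
      show "A \<subseteq> {f. \<forall>x. (x \<in> {i,j} \<longrightarrow> f x \<in> {0..2}) \<and> (x \<notin> {i,j} \<longrightarrow> f x = 0)}"
      proof
        fix \<alpha> assume "\<alpha> \<in> A"
        then have le: "\<alpha> l \<le> \<gamma> l" for l by (simp add: A_def)
        have g2: "\<gamma> x \<le> 2" for x by (simp add: True evv_def)
        have g0: "x \<notin> {i,j} \<Longrightarrow> \<gamma> x = 0" for x by (simp add: True evv_def)
        have "\<alpha> x \<le> 2" for x using le[of x] g2[of x] by linarith
        moreover have "x \<notin> {i,j} \<Longrightarrow> \<alpha> x = 0" for x using le[of x] g0[of x] by linarith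
        ultimately show "\<alpha> \<in> {f. \<forall>x. (x \<in> {i,j} \<longrightarrow> f x \<in> {0..2}) \<and> (x \<notin> {i,j} \<longrightarrow> f x = 0)}"
          by auto
      qed
    qed (intro finite_set_of_finite_funs; simp)
    have eiA: "e i \<in> A" using True by (auto simp: A_def e_def evv_def)
    have "sum f A = sum (\<lambda>\<alpha>. if \<alpha> = e i then f (e i) else 0) A"
      by (rule sum.cong) (auto simp: f_def zv)
    also have "\<dots> = f (e i)" using fin eiA by (simp add: sum.delta)
    also have "(\<lambda>l. \<gamma> l - e i l) = e j" using True by (auto simp: e_def evv_def)
    then have "f (e i) = tw \<mu> i j" using twist_unit[OF assms, of \<mu> j]
      by (simp add: f_def zv e_def)
    finally show ?thesis using S True by (simp add: Zf_def)
  next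
    case False
    have "sum f A = 0"
    proof (rule sum.neutral, intro ballI)
      fix \<alpha> assume a: "\<alpha> \<in> A"
      show "f \<alpha> = 0"
      proof (rule ccontr)
        assume "f \<alpha> \<noteq> 0"
        then have 1: "\<alpha> = e i" and 2: "(\<lambda>l. \<gamma> l - \<alpha> l) = e j"
          by (auto simp: f_def zv split: if_splits)
        have "\<gamma> = evv i j"
        proof
          fix l
          have "\<gamma> l = (\<gamma> l - \<alpha> l) + \<alpha> l" using a by (simp add: A_def)
          also have "\<dots> = e j l + e i l" using 1 2 by (metis)
          finally show "\<gamma> l = evv i j l" by (simp add: e_def evv_def)
        qed
        with False show False by simp
      qed
    qed
    then show ?thesis using S False by (simp add: Zf_def)
  qed
qed

lemma bilin:
  "smult_S n \<mu> (linS n a) (linS n b) \<gamma> = (\<Sum>i<n. \<Sum>j<n. a i * b j * smult_S n \<mu> (zvar i) (zvar j) \<gamma>)"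
proof -
  define A where "A = {\<alpha>. \<forall>l. \<alpha> l \<le> \<gamma> l}"
  define T where "T \<alpha> = twist n \<mu> \<alpha> (\<lambda>i. \<gamma> i - \<alpha> i)" for \<alpha>
  have "smult_S n \<mu> (linS n a) (linS n b) \<gamma>
      = (\<Sum>\<alpha>\<in>A. (\<Sum>i<n. a i * zvar i \<alpha>) * (\<Sum>j<n. b j * zvar j (\<lambda>l. \<gamma> l - \<alpha> l)) * T \<alpha>)"
    by (simp add: smult_S_def linS_def A_def T_def)
  also have "\<dots> = (\<Sum>\<alpha>\<in>A. \<Sum>i<n. \<Sum>j<n. a i * b j * (zvar i \<alpha> * zvar j (\<lambda>l. \<gamma> l - \<alpha> l) * T \<alpha>))"
  proof (rule sum.cong[OF refl])
    fix \<alpha>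
    have pp: "(\<Sum>i<n. x i) * (\<Sum>j<n. y j) * t = (\<Sum>i<n. \<Sum>j<n. x i * y j * t)"
      for x y :: "nat \<Rightarrow> 'a" and t unfolding sum_product by (simp only: sum_distrib_right)
    show "(\<Sum>i<n. a i * zvar i \<alpha>) * (\<Sum>j<n. b j * zvar j (\<lambda>l. \<gamma> l - \<alpha> l)) * T \<alpha> =
      (\<Sum>i<n. \<Sum>j<n. a i * b j * (zvar i \<alpha> * zvar j (\<lambda>l. \<gamma> l - \<alpha> l) * T \<alpha>))"
      unfolding pp by (simp add: mult_ac)
  qed
  also have "\<dots> = (\<Sum>i<n. \<Sum>\<alpha>\<in>A. \<Sum>j<n. a i * b j * (zvar i \<alpha> * zvar j (\<lambda>l. \<gamma> l - \<alpha> l) * T \<alpha>))"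
    by (rule sum.swap)
  also have "\<dots> = (\<Sum>i<n. \<Sum>j<n. \<Sum>\<alpha>\<in>A. a i * b j * (zvar i \<alpha> * zvar j (\<lambda>l. \<gamma> l - \<alpha> l) * T \<alpha>))"
    by (rule sum.cong[OF refl], rule sum.swap)
  also have "\<dots> = (\<Sum>i<n. \<Sum>j<n. a i * b j * smult_S n \<mu> (zvar i) (zvar j) \<gamma>)"
    by (simp add: smult_S_def A_def T_def sum_distrib_left)
  finally show ?thesis .
qed

definition FF :: "nat \<Rightarrow> (nat \<Rightarrow> nat \<Rightarrow> 'k::field) \<Rightarrow> (nat \<Rightarrow> nat \<Rightarrow> 'k) \<Rightarrow> (nat \<Rightarrow> nat) \<Rightarrow> 'k" where
  "FF n \<mu> X \<gamma> = (\<Sum>i<n. \<Sum>j<n. X i j * Zf \<mu> i j \<gamma>)"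

lemma evv_eq: "evv i j = evv p q \<longleftrightarrow> (i = p \<and> j = q) \<or> (i = q \<and> j = p)"
proof
  assume h: "evv i j = evv p q"
  have h1: "evv i j l = evv p q l" for l using h by simp
  show "(i = p \<and> j = q) \<or> (i = q \<and> j = p)"
    using h1[of i] h1[of j] h1[of p] h1[of q] unfolding evv_def
    by (cases "i=p"; cases "i=q"; cases "j=p"; cases "j=q"; simp add: evv_def)
next
  assume "(i = p \<and> j = q) \<or> (i = q \<and> j = p)"
  then show "evv i j = evv p q" by (auto simp: evv_def fun_eq_iff)
qed

lemma dd:
  assumes "p < n" "q < (n::nat)"
  shows "(\<Sum>i<n. \<Sum>j<n. if i = p then if j = q then (c::'k::field) else 0 else 0) = c"
proof -
  have "(\<Sum>j<n. if i = p then if j = q then c else 0 else 0) = (if i = p then c else 0)" for i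
    using assms by (cases "i = p") (simp_all add: sum.delta)
  then show ?thesis using assms by simp
qed

lemma FF_ev:
  assumes "p \<le> q" "q < n"
  shows "FF n \<mu> X (evv p q) = X p q + (if p < q then \<mu> p q * X q p else 0)"
proof -
  have "FF n \<mu> X (evv p q) = (\<Sum>i<n. \<Sum>j<n. (if i = p then (if j = q then X p q else 0) else 0)
         + (if i = q then (if j = p then (if p < q then \<mu> p q * X q p else 0) else 0) else 0))"
    unfolding FF_def
  proof (intro sum.cong refl)
    fix i j
    have e: "evv p q = evv i j \<longleftrightarrow> (i = p \<and> j = q) \<or> (i = q \<and> j = p)" unfolding evv_eq by auto
    show "X i j * Zf \<mu> i j (evv p q) = (if i = p then (if j = q then X p q else 0) else 0)
         + (if i = q then (if j = p then (if p < q then \<mu> p q * X q p else 0) else 0) else 0)"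
      unfolding Zf_def e using assms(1)
      by (cases "i=p"; cases "j=q"; cases "i=q"; cases "j=p"; simp add: tw_def)
  qed
  also have "\<dots> = X p q + (if p < q then \<mu> p q * X q p else 0)"
    using assms by (simp add: sum.distrib dd)
  finally show ?thesis .
qed

lemma FF_ext:
  assumes "\<And>p q. p \<le> q \<Longrightarrow> q < n \<Longrightarrow> FF n \<mu> X (evv p q) = FF n \<mu> Y (evv p q)"
  shows "FF n \<mu> X \<gamma> = FF n \<mu> Y \<gamma>"
proof (cases "\<exists>i j. i < n \<and> j < n \<and> \<gamma> = evv i j")
  case True
  then obtain i j where ij: "i < n" "j < n" "\<gamma> = evv i j" by blast
  show ?thesis
  proof (cases "i \<le> j")
    case True then show ?thesis using assms ij by simp
  next
    case False
    have "\<gamma> = evv j i" using ij evv_eq[of i j j i] by simp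
    then show ?thesis using assms ij False by simp
  qed
next
  case False
  then have "FF n \<mu> Z \<gamma> = 0" for Z unfolding FF_def by (intro sum.neutral) (auto simp: Zf_def)
  then show ?thesis by simp
qed

lemma ab_FF:
  "smult_S n \<mu> (linS n a) (linS n b) = FF n \<mu> (\<lambda>i j. a i * b j)"
  unfolding FF_def by (rule ext, subst bilin) (intro sum.cong refl, simp add: Z_formula)

lemma qS_FF: "qS n \<mu> N = FF n \<mu> N"
  unfolding FF_def qS_def by (rule ext) (intro sum.cong refl, simp add: Z_formula)

lemma comb_FF:
  "(\<lambda>\<gamma>. \<Sum>k<n. c k * qS n \<mu> (M k) \<gamma>) = FF n \<mu> (\<lambda>i j. \<Sum>k<n. c k * M k i j)"
proof
  fix \<gamma>
  have "(\<Sum>k<n. c k * qS n \<mu> (M k) \<gamma>) = (\<Sum>k<n. \<Sum>i<n. \<Sum>j<n. c k * M k i j * Zf \<mu> i j \<gamma>)"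
    by (simp add: qS_FF FF_def sum_distrib_left mult_ac)
  also have "\<dots> = (\<Sum>i<n. \<Sum>k<n. \<Sum>j<n. c k * M k i j * Zf \<mu> i j \<gamma>)" by (rule sum.swap)
  also have "\<dots> = (\<Sum>i<n. \<Sum>j<n. \<Sum>k<n. c k * M k i j * Zf \<mu> i j \<gamma>)"
    by (intro sum.cong refl sum.swap)
  also have "\<dots> = FF n \<mu> (\<lambda>i j. \<Sum>k<n. c k * M k i j) \<gamma>"
    by (simp add: FF_def sum_distrib_right)
  finally show "(\<Sum>k<n. c k * qS n \<mu> (M k) \<gamma>) = FF n \<mu> (\<lambda>i j. \<Sum>k<n. c k * M k i j) \<gamma>" .
qed

lemma Psym:
  assumes sp: "skew_params n \<mu>" and pq: "p < n" "q < n"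
  shows "a p * b q + \<mu> p q * a q * b p = \<mu> p q * (a q * b p + \<mu> q p * a p * b q)"
proof -
  have h: "\<mu> p q * \<mu> q p = 1" using sp pq by (simp add: skew_params_def)
  have "\<mu> p q * (a q * b p + \<mu> q p * a p * b q) = \<mu> p q * a q * b p + (\<mu> p q * \<mu> q p) * a p * b q"
    by (simp add: algebra_simps)
  then show ?thesis using h by simp
qed

lemma key_equiv:
  fixes \<mu> N :: "nat \<Rightarrow> nat \<Rightarrow> 'k::field"
  assumes sp: "skew_params n \<mu>" and two: "(2::'k) \<noteq> 0"
    and Ns: "\<forall>i<n. \<forall>j<n. N i j = \<mu> i j * N j i"
  shows "FF n \<mu> (\<lambda>i j. a i * b j) = FF n \<mu> N \<longleftrightarrow>
         (\<forall>p<n. \<forall>q<n. a p * b q + \<mu> p q * a q * b p = 2 * N p q)"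
proof
  assume E: "FF n \<mu> (\<lambda>i j. a i * b j) = FF n \<mu> N"
  have lt: "a p * b q + \<mu> p q * a q * b p = 2 * N p q" if "p < q" "q < n" for p q
  proof -
    have "FF n \<mu> (\<lambda>i j. a i * b j) (evv p q) = FF n \<mu> N (evv p q)" using E by simp
    then have 1: "a p * b q + \<mu> p q * (a q * b p) = N p q + \<mu> p q * N q p"
      using FF_ev[of p q n \<mu> "\<lambda>i j. a i * b j"] FF_ev[of p q n \<mu> N] that by simp
    have "\<mu> p q * N q p = \<mu> p q * \<mu> q p * N p q" using Ns[rule_format, of q p] that by simp
    also have "\<mu> p q * \<mu> q p = 1" using sp that by (simp add: skew_params_def)
    finally have "\<mu> p q * N q p = N p q" by simp
    then have "a p * b q + \<mu> p q * a q * b p = N p q + N p q" using 1 by (simp add: mult.assoc)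
    then show ?thesis by (metis mult_2)
  qed
  show "\<forall>p<n. \<forall>q<n. a p * b q + \<mu> p q * a q * b p = 2 * N p q"
  proof (intro allI impI)
    fix p q assume pq: "p < n" "q < n"
    consider "p < q" | "p = q" | "q < p" by linarith
    then show "a p * b q + \<mu> p q * a q * b p = 2 * N p q"
    proof cases
      case 1 then show ?thesis using lt pq by simp
    next
      case 2
      have "FF n \<mu> (\<lambda>i j. a i * b j) (evv p p) = FF n \<mu> N (evv p p)" using E by simp
      then have "a p * b p = N p p" using FF_ev[of p p n \<mu> "\<lambda>i j. a i * b j"] FF_ev[of p p n \<mu> N] pq by simp
      moreover have "\<mu> p p = 1" using sp pq by (simp add: skew_params_def)
      ultimately have "a p * b p + \<mu> p p * a p * b p = N p p + N p p" using \<open>\<mu> p p = 1\<close> by simp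
      then show ?thesis using 2 by (metis mult_2)
    next
      case 3
      have "a p * b q + \<mu> p q * a q * b p = \<mu> p q * (a q * b p + \<mu> q p * a p * b q)"
        using Psym[OF sp pq] .
      also have "\<dots> = \<mu> p q * (2 * N q p)" using lt[of q p] 3 pq by simp
      also have "\<dots> = 2 * N p q" using Ns[rule_format, of p q] pq by (simp add: mult_ac)
      finally show ?thesis .
    qed
  qed
next
  assume H: "\<forall>p<n. \<forall>q<n. a p * b q + \<mu> p q * a q * b p = 2 * N p q"
  show "FF n \<mu> (\<lambda>i j. a i * b j) = FF n \<mu> N"
  proof (rule ext, rule FF_ext)
    fix p q assume pq: "p \<le> q" "q < n"
    show "FF n \<mu> (\<lambda>i j. a i * b j) (evv p q) = FF n \<mu> N (evv p q)"
    proof (cases "p < q")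
      case True
      have "\<mu> p q * N q p = \<mu> p q * \<mu> q p * N p q" using Ns[rule_format, of q p] pq True by simp
      also have "\<mu> p q * \<mu> q p = 1" using sp pq True by (simp add: skew_params_def)
      finally have "\<mu> p q * N q p = N p q" by simp
      then have "FF n \<mu> N (evv p q) = N p q + N p q" using FF_ev[of p q n \<mu> N] pq True by simp
      moreover have "FF n \<mu> (\<lambda>i j. a i * b j) (evv p q) = a p * b q + \<mu> p q * a q * b p"
        using FF_ev[of p q n \<mu> "\<lambda>i j. a i * b j"] pq True by (simp add: mult.assoc)
      moreover have "a p * b q + \<mu> p q * a q * b p = 2 * N p q" using H pq True by simp
      ultimately show ?thesis by (metis mult_2)
    next
      case False
      then have pe: "p = q" using pq by simp
      have "\<mu> p p = 1" using sp pq by (simp add: skew_params_def)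
      moreover have "a p * b p + \<mu> p p * a p * b p = 2 * N p p" using H pq pe by simp
      ultimately have "2 * (a p * b p) = 2 * N p p" by (metis mult_2 mult_1_left mult.assoc)
      then have "a p * b p = N p p" using two by simp
      then show ?thesis using FF_ev[of p q n \<mu> "\<lambda>i j. a i * b j"] FF_ev[of p q n \<mu> N] pq pe by simp
    qed
  qed
qed

lemma cp_sum: "(\<Sum>d\<in>{..<n}\<times>{..<n}. f d) = (\<Sum>i<(n::nat). \<Sum>j<n. f (i,j))"
  by (simp add: sum.cartesian_product)

lemma wsum:
  fixes \<alpha> :: "nat \<Rightarrow> nat \<Rightarrow> 'k::field"
  assumes "\<forall>l m. w l m = (if l < n \<and> m < n then \<alpha> l m + \<mu> m l * \<alpha> m l else 0)"
  shows "(\<Sum>i<n. \<Sum>j<n. w i j * a i * b j) =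
         (\<Sum>i<n. \<Sum>j<n. \<alpha> i j * (a i * b j + \<mu> i j * a j * b i))"
proof -
  have "(\<Sum>i<n. \<Sum>j<n. w i j * a i * b j) =
        (\<Sum>i<n. \<Sum>j<n. \<alpha> i j * a i * b j + \<mu> j i * \<alpha> j i * a i * b j)"
    using assms by (intro sum.cong refl) (simp add: algebra_simps)
  also have "\<dots> = (\<Sum>i<n. \<Sum>j<n. \<alpha> i j * a i * b j) + (\<Sum>i<n. \<Sum>j<n. \<mu> j i * \<alpha> j i * a i * b j)"
    by (simp add: sum.distrib)
  also have "(\<Sum>i<n. \<Sum>j<n. \<mu> j i * \<alpha> j i * a i * b j) = (\<Sum>j<n. \<Sum>i<n. \<mu> j i * \<alpha> j i * a i * b j)"
    by (rule sum.swap)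
  also have "(\<Sum>i<n. \<Sum>j<n. \<alpha> i j * a i * b j) + (\<Sum>j<n. \<Sum>i<n. \<mu> j i * \<alpha> j i * a i * b j)
      = (\<Sum>i<n. \<Sum>j<n. \<alpha> i j * a i * b j + \<mu> i j * \<alpha> i j * a j * b i)"
    by (simp add: sum.distrib)
  also have "\<dots> = (\<Sum>i<n. \<Sum>j<n. \<alpha> i j * (a i * b j + \<mu> i j * a j * b i))"
    by (intro sum.cong refl) (simp add: algebra_simps)
  finally show ?thesis .
qed

lemma Gamma_iff:
  fixes \<mu> :: "nat \<Rightarrow> nat \<Rightarrow> 'k::field" and M :: "nat \<Rightarrow> nat \<Rightarrow> nat \<Rightarrow> 'k"
  assumes "nonzero_vec n a" "nonzero_vec n b"
  shows "(a, b) \<in> Gamma n \<mu> M \<longleftrightarrow>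
    (\<forall>\<alpha>. (\<forall>k<n. (\<Sum>i<n. \<Sum>j<n. \<alpha> i j * M k i j) = 0) \<longrightarrow>
          (\<Sum>i<n. \<Sum>j<n. \<alpha> i j * (a i * b j + \<mu> i j * a j * b i)) = 0)"
proof
  assume G: "(a, b) \<in> Gamma n \<mu> M"
  show "\<forall>\<alpha>. (\<forall>k<n. (\<Sum>i<n. \<Sum>j<n. \<alpha> i j * M k i j) = 0) \<longrightarrow>
          (\<Sum>i<n. \<Sum>j<n. \<alpha> i j * (a i * b j + \<mu> i j * a j * b i)) = 0"
  proof (intro allI impI)
    fix \<alpha> assume c: "\<forall>k<n. (\<Sum>i<n. \<Sum>j<n. \<alpha> i j * M k i j) = 0"
    define w where "w l m = (if l < n \<and> m < n then \<alpha> l m + \<mu> m l * \<alpha> m l else 0)" for l m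
    have "w \<in> Wrel n \<mu> M" unfolding Wrel_def using c by (auto simp: w_def)
    then have "(\<Sum>i<n. \<Sum>j<n. w i j * a i * b j) = 0" using G by (auto simp: Gamma_def)
    then show "(\<Sum>i<n. \<Sum>j<n. \<alpha> i j * (a i * b j + \<mu> i j * a j * b i)) = 0"
      using wsum[of w n \<alpha> \<mu> a b] by (simp add: w_def)
  qed
next
  assume H: "\<forall>\<alpha>. (\<forall>k<n. (\<Sum>i<n. \<Sum>j<n. \<alpha> i j * M k i j) = 0) \<longrightarrow>
          (\<Sum>i<n. \<Sum>j<n. \<alpha> i j * (a i * b j + \<mu> i j * a j * b i)) = 0"
  have "(\<Sum>i<n. \<Sum>j<n. w i j * a i * b j) = 0" if "w \<in> Wrel n \<mu> M" for w
  proof -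
    from that obtain \<alpha> where c: "\<forall>k<n. (\<Sum>i<n. \<Sum>j<n. \<alpha> i j * M k i j) = 0"
      and wd: "\<forall>l m. w l m = (if l < n \<and> m < n then \<alpha> l m + \<mu> m l * \<alpha> m l else 0)"
      unfolding Wrel_def by blast
    show ?thesis using wsum[OF wd, of a b] H c by simp
  qed
  then show "(a, b) \<in> Gamma n \<mu> M" using assms by (simp add: Gamma_def)
qed

lemma ab_nonzero:
  fixes \<mu> :: "nat \<Rightarrow> nat \<Rightarrow> 'k::field"
  assumes sp: "skew_params n \<mu>" and na: "nonzero_vec n a" and nb: "nonzero_vec n b"
  shows "FF n \<mu> (\<lambda>i j. a i * b j) \<noteq> (\<lambda>_. 0)"
proof -
  define i0 where "i0 = (LEAST i. a i \<noteq> 0)"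
  define j0 where "j0 = (LEAST i. b i \<noteq> 0)"
  obtain i1 where i1: "i1 < n" "a i1 \<noteq> 0" using na by (auto simp: nonzero_vec_def)
  obtain j1 where j1: "j1 < n" "b j1 \<noteq> 0" using nb by (auto simp: nonzero_vec_def)
  have ai0: "a i0 \<noteq> 0" unfolding i0_def by (rule LeastI[of _ i1]) (rule i1(2))
  have bj0: "b j0 \<noteq> 0" unfolding j0_def by (rule LeastI[of _ j1]) (rule j1(2))
  have i0n: "i0 < n" using Least_le[of "\<lambda>i. a i \<noteq> 0" i1] i1 unfolding i0_def by simp
  have j0n: "j0 < n" using Least_le[of "\<lambda>i. b i \<noteq> 0" j1] j1 unfolding j0_def by simp
  have abl: "a i = 0" if "i < i0" for i using not_less_Least[of i "\<lambda>i. a i \<noteq> 0"] that unfolding i0_def by simp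
  have bbl: "b i = 0" if "i < j0" for i using not_less_Least[of i "\<lambda>i. b i \<noteq> 0"] that unfolding j0_def by simp
  consider "i0 < j0" | "i0 = j0" | "j0 < i0" by linarith
  then show ?thesis
  proof cases
    case 1
    have "FF n \<mu> (\<lambda>i j. a i * b j) (evv i0 j0) = a i0 * b j0"
      using FF_ev[of i0 j0 n \<mu> "\<lambda>i j. a i * b j"] 1 j0n bbl[of i0] by simp
    then show ?thesis using ai0 bj0 by (metis mult_eq_0_iff)
  next
    case 2
    have "FF n \<mu> (\<lambda>i j. a i * b j) (evv i0 i0) = a i0 * b i0"
      using FF_ev[of i0 i0 n \<mu> "\<lambda>i j. a i * b j"] i0n by simp
    then show ?thesis using ai0 bj0 2 by (metis mult_eq_0_iff)
  next
    case 3
    have "\<mu> j0 i0 \<noteq> 0" using sp i0n j0n by (simp add: skew_params_def)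
    have "FF n \<mu> (\<lambda>i j. a i * b j) (evv j0 i0) = \<mu> j0 i0 * (a i0 * b j0)"
      using FF_ev[of j0 i0 n \<mu> "\<lambda>i j. a i * b j"] 3 i0n abl[of j0] by simp
    then show ?thesis using ai0 bj0 \<open>\<mu> j0 i0 \<noteq> 0\<close> by (metis mult_eq_0_iff)
  qed
qed

theorem lemma1p9:
  fixes \<mu> :: "nat \<Rightarrow> nat \<Rightarrow> 'k::field" and M :: "nat \<Rightarrow> nat \<Rightarrow> nat \<Rightarrow> 'k"
    and n :: nat and a b :: "nat \<Rightarrow> 'k"
  assumes "alg_closed TYPE('k)"
    and "(2::'k) \<noteq> 0"
    and "n \<ge> 1"
    and "skew_params n \<mu>"
    and "\<forall>k<n. mu_symmetric n \<mu> (M k)"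
    and "lin_indep_mats n M"
    and "normalizing_qsystem n \<mu> M"
    and "base_point_free n \<mu> M"
    and "nonzero_vec n a" and "nonzero_vec n b"
  shows "in_proj_qspan n \<mu> M a b \<longleftrightarrow> (a, b) \<in> Gamma n \<mu> M"
proof -
  note sp = assms(4) and two = assms(2)
  define P where "P i j = a i * b j + \<mu> i j * a j * b i" for i j
  have ab: "smult_S n \<mu> (linS n a) (linS n b) = FF n \<mu> (\<lambda>i j. a i * b j)" by (rule ab_FF)
  have nz: "FF n \<mu> (\<lambda>i j. a i * b j) \<noteq> (\<lambda>_. 0)" using ab_nonzero[OF sp assms(9,10)] .
  have Nsym: "\<forall>i<n. \<forall>j<n. (\<Sum>k<n. c k * M k i j) = \<mu> i j * (\<Sum>k<n. c k * M k j i)" for c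
  proof (intro allI impI)
    fix i j assume ij: "i < n" "j < n"
    have "(\<Sum>k<n. c k * M k i j) = (\<Sum>k<n. \<mu> i j * (c k * M k j i))"
    proof (intro sum.cong refl)
      fix k assume "k \<in> {..<n}"
      then have "mu_symmetric n \<mu> (M k)" using assms(5) by simp
      then have "M k i j = \<mu> i j * M k j i" using ij unfolding mu_symmetric_def by blast
      then show "c k * M k i j = \<mu> i j * (c k * M k j i)" by (simp add: mult_ac)
    qed
    also have "\<dots> = \<mu> i j * (\<Sum>k<n. c k * M k j i)" by (simp add: sum_distrib_left)
    finally show "(\<Sum>k<n. c k * M k i j) = \<mu> i j * (\<Sum>k<n. c k * M k j i)" .
  qed
  have qs: "f \<in> qspan n \<mu> M \<longleftrightarrow> (\<exists>c. f = FF n \<mu> (\<lambda>i j. \<Sum>k<n. c k * M k i j))" for f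
    unfolding qspan_def comb_FF by simp
  have GI: "(a, b) \<in> Gamma n \<mu> M \<longleftrightarrow>
    (\<forall>\<alpha>. (\<forall>k<n. (\<Sum>i<n. \<Sum>j<n. \<alpha> i j * M k i j) = 0) \<longrightarrow> (\<Sum>i<n. \<Sum>j<n. \<alpha> i j * P i j) = 0)"
    unfolding P_def by (rule Gamma_iff[OF assms(9,10)])
  show ?thesis
  proof
    assume "in_proj_qspan n \<mu> M a b"
    then obtain c where c: "FF n \<mu> (\<lambda>i j. a i * b j) = FF n \<mu> (\<lambda>i j. \<Sum>k<n. c k * M k i j)"
      unfolding in_proj_qspan_def Let_def ab qs by blast
    have PN: "\<forall>p<n. \<forall>q<n. P p q = 2 * (\<Sum>k<n. c k * M k p q)"
      using key_equiv[OF sp two Nsym[of c], of a b] c unfolding P_def by blast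
    show "(a, b) \<in> Gamma n \<mu> M" unfolding GI
    proof (intro allI impI)
      fix \<alpha> assume h: "\<forall>k<n. (\<Sum>i<n. \<Sum>j<n. \<alpha> i j * M k i j) = 0"
      have "(\<Sum>i<n. \<Sum>j<n. \<alpha> i j * P i j) = (\<Sum>i<n. \<Sum>j<n. \<Sum>k<n. 2 * c k * (\<alpha> i j * M k i j))"
        using PN by (intro sum.cong refl) (simp add: sum_distrib_left mult_ac)
      also have "\<dots> = (\<Sum>i<n. \<Sum>k<n. \<Sum>j<n. 2 * c k * (\<alpha> i j * M k i j))"
        by (intro sum.cong refl sum.swap)
      also have "\<dots> = (\<Sum>k<n. \<Sum>i<n. \<Sum>j<n. 2 * c k * (\<alpha> i j * M k i j))"
        by (rule sum.swap)
      also have "\<dots> = (\<Sum>k<n. 2 * c k * (\<Sum>i<n. \<Sum>j<n. \<alpha> i j * M k i j))"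
        by (simp add: sum_distrib_left)
      also have "\<dots> = 0" using h by simp
      finally show "(\<Sum>i<n. \<Sum>j<n. \<alpha> i j * P i j) = 0" .
    qed
  next
    assume G: "(a, b) \<in> Gamma n \<mu> M"
    have H: "\<forall>\<alpha>. (\<forall>k<n. (\<Sum>i<n. \<Sum>j<n. \<alpha> i j * M k i j) = 0) \<longrightarrow> (\<Sum>i<n. \<Sum>j<n. \<alpha> i j * P i j) = 0"
      using G GI by blast
    have finD: "finite ({..<n}\<times>{..<n})" by simp
    have ex: "\<exists>c. \<forall>d\<in>{..<n}\<times>{..<n}. (case d of (i,j) \<Rightarrow> P i j) = (\<Sum>k<n. c k * (case d of (i,j) \<Rightarrow> M k i j))"
      using dual_lemma[where D="{..<n}\<times>{..<n}" and P="\<lambda>(i,j). P i j" and m=n and v="\<lambda>k (i,j). M k i j", OF finD]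
    proof
      assume "\<exists>c. \<forall>d\<in>{..<n}\<times>{..<n}. (case d of (i,j) \<Rightarrow> P i j) = (\<Sum>k<n. c k * (case d of (i,j) \<Rightarrow> M k i j))"
      then show ?thesis .
    next
      assume "\<exists>\<alpha>. (\<forall>k<n. (\<Sum>d\<in>{..<n}\<times>{..<n}. \<alpha> d * (case d of (i,j) \<Rightarrow> M k i j)) = 0) \<and>
          (\<Sum>d\<in>{..<n}\<times>{..<n}. \<alpha> d * (case d of (i,j) \<Rightarrow> P i j)) \<noteq> 0"
      then obtain \<alpha>' where h: "\<forall>k<n. (\<Sum>d\<in>{..<n}\<times>{..<n}. \<alpha>' d * (case d of (i,j) \<Rightarrow> M k i j)) = 0"
          "(\<Sum>d\<in>{..<n}\<times>{..<n}. \<alpha>' d * (case d of (i,j) \<Rightarrow> P i j)) \<noteq> 0" by blast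
      have "(\<forall>k<n. (\<Sum>i<n. \<Sum>j<n. \<alpha>' (i,j) * M k i j) = 0)" using h(1) unfolding cp_sum by simp
      then have "(\<Sum>i<n. \<Sum>j<n. \<alpha>' (i,j) * P i j) = 0" using H[rule_format, of "\<lambda>i j. \<alpha>' (i,j)"] by simp
      then show ?thesis using h(2) unfolding cp_sum by simp
    qed
    then obtain c where c: "\<forall>d\<in>{..<n}\<times>{..<n}. (case d of (i,j) \<Rightarrow> P i j) = (\<Sum>k<n. c k * (case d of (i,j) \<Rightarrow> M k i j))"
      by blast
    define N where "N i j = (\<Sum>k<n. (c k / 2) * M k i j)" for i j
    have PN: "\<forall>p<n. \<forall>q<n. P p q = 2 * N p q"
    proof (intro allI impI)
      fix p q assume "p < n" "q < n"
      then have "P p q = (\<Sum>k<n. c k * M k p q)" using c by auto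
      also have "\<dots> = 2 * N p q" using two by (simp add: N_def sum_distrib_left)
      finally show "P p q = 2 * N p q" .
    qed
    have "FF n \<mu> (\<lambda>i j. a i * b j) = FF n \<mu> N"
      using key_equiv[OF sp two Nsym[of "\<lambda>k. c k / 2"], of a b] PN unfolding P_def N_def by blast
    then have "smult_S n \<mu> (linS n a) (linS n b) \<in> qspan n \<mu> M"
      unfolding ab qs N_def by (rule exI[of _ "\<lambda>k. c k / 2"])
    then show "in_proj_qspan n \<mu> M a b" using nz ab unfolding in_proj_qspan_def Let_def by simp
  qed
qed

end
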